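(* Let $0<a,b<1$, $r>as$, $s>br$. For every $\alpha\in(\rho_1,1)\cap[0,1)$, $\beta\in(\rho_2,1)\cap[0,1)$ and every $x,y>0$, $$V(T_{\alpha,\beta}(x,y))-V(x,y)\le -bx\,\Psi(\alpha,X,r)-ay\,\Psi(\beta,Y,s)\le 0,$$ where $X=r-x-ay$, $Y=s-bx-y$; moreover $V(T_{\alpha,\beta}(x,y))-V(x,y)<0$ for every $(x,y)\ne(p,q)$ with $x,y>0$.
   Context: $p=\frac{r-as}{1-ab}$, $q=\frac{s-br}{1-ab}$. $T_{\alpha,\beta}(x,y)=\big(x[(1-\alpha)e^{r-x-ay}+\alpha],\,y[(1-\beta)e^{s-bx-y}+\beta]\big)$. $V(x,y)=bx^2+ay^2+2abxy-2rbx-2say$. For $u\in\mathbb R$, $\varsigma\in[0,1)$, $t>0$: $\Phi(\varsigma,u,t)=(1-\varsigma)(1-e^u)(t-u)+2u$ and $\Psi(\varsigma,u,t)=(1-\varsigma)(e^u-1)\Phi(\varsigma,u,t)$. $\rho_1=\frac{e^{r-2}-1}{e^{r-2}+1}$, $\rho_2=\frac{e^{s-2}-1}{e^{s-2}+1}$. *)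

theory Defs
  imports Complex_Main
begin

definition eqp :: "real \<Rightarrow> real \<Rightarrow> real \<Rightarrow> real \<Rightarrow> real" where
  "eqp a b r s = (r - a * s) / (1 - a * b)"

definition eqq :: "real \<Rightarrow> real \<Rightarrow> real \<Rightarrow> real \<Rightarrow> real" where
  "eqq a b r s = (s - b * r) / (1 - a * b)"

definition Tmap :: "real \<Rightarrow> real \<Rightarrow> real \<Rightarrow> real \<Rightarrow> real \<Rightarrow> real \<Rightarrow> real \<times> real \<Rightarrow> real \<times> real" where
  "Tmap a b r s \<alpha> \<beta> xy = (case xy of (x, y) \<Rightarrow>
     (x * ((1 - \<alpha>) * exp (r - x - a * y) + \<alpha>),
      y * ((1 - \<beta>) * exp (s - b * x - y) + \<beta>)))"

definition Vfun :: "real \<Rightarrow> real \<Rightarrow> real \<Rightarrow> real \<Rightarrow> real \<times> real \<Rightarrow> real" where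
  "Vfun a b r s xy = (case xy of (x, y) \<Rightarrow>
     b * x^2 + a * y^2 + 2 * a * b * x * y - 2 * r * b * x - 2 * s * a * y)"

definition Phi :: "real \<Rightarrow> real \<Rightarrow> real \<Rightarrow> real" where
  "Phi \<sigma> u t = (1 - \<sigma>) * (1 - exp u) * (t - u) + 2 * u"

definition Psi :: "real \<Rightarrow> real \<Rightarrow> real \<Rightarrow> real" where
  "Psi \<sigma> u t = (1 - \<sigma>) * (exp u - 1) * Phi \<sigma> u t"

definition rho :: "real \<Rightarrow> real" where
  "rho r = (exp (r - 2) - 1) / (exp (r - 2) + 1)"

end

theory Submission
  imports Defs
begin

lemma ident:
  fixes a b r s x y E1 E2 \<alpha> \<beta> :: real
  shows "Vfun a b r s (x*((1-\<alpha>)*E1+\<alpha>), y*((1-\<beta>)*E2+\<beta>)) - Vfun a b r s (x,y)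
   = (- b * x * ((1-\<alpha>)*(E1-1)*((1-\<alpha>)*(1-E1)*(r-(r-x-a*y)) + 2*(r-x-a*y)))
      - a * y * ((1-\<beta>)*(E2-1)*((1-\<beta>)*(1-E2)*(s-(s-b*x-y)) + 2*(s-b*x-y))))
     - a*b*x*y*((1-\<alpha>)*(E1-1) - (1-\<beta>)*(E2-1))^2"
  unfolding Vfun_def by (simp add: power2_eq_square) algebra

lemma fderiv_nonneg:
  fixes r X :: real
  shows "0 \<le> exp (r-2) + exp X * (1 - r + X)"
proof -
  have "1 + (r-2-X) \<le> exp (r-2-X)" by (rule exp_ge_add_one_self)
  hence "exp X * (1 + (r-2-X)) \<le> exp X * exp (r-2-X)" by simp
  also have "\<dots> = exp (r-2)" by (simp add: exp_add[symmetric])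
  finally show ?thesis by (simp add: algebra_simps)
qed

lemma fmono:
  fixes r X Z :: real
  assumes "X \<le> Z"
  shows "X*(exp(r-2)+1) - (exp X - 1)*(r-X) \<le> Z*(exp(r-2)+1) - (exp Z - 1)*(r-Z)"
proof (rule DERIV_nonneg_imp_nondecreasing[OF assms])
  fix t assume "X \<le> t" "t \<le> Z"
  have "((\<lambda>t. t*(exp(r-2)+1) - (exp t - 1)*(r-t)) has_real_derivative
      (exp(r-2)+1) - (exp t * (r-t) + (exp t - 1)*(-1))) (at t)"
    by (auto intro!: derivative_eq_intros)
  moreover have "(exp(r-2)+1) - (exp t * (r-t) + (exp t - 1)*(-1)) = exp (r-2) + exp t * (1 - r + t)"
    by (simp add: algebra_simps)
  ultimately show "\<exists>y. ((\<lambda>t. t*(exp(r-2)+1) - (exp t - 1)*(r-t)) has_real_derivative y) (at t) \<and> 0 \<le> y"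
    using fderiv_nonneg[of r t] by auto
qed

lemma psi_pos:
  fixes r X \<alpha> :: real
  assumes "rho r < \<alpha>" "\<alpha> < 1" "X < r" "X \<noteq> 0"
  shows "0 < Psi \<alpha> X r"
proof -
  define c where "c = exp (r-2) + 1"
  have c: "c > 0" unfolding c_def by (simp add: add_pos_pos)
  have "1 - rho r = 2 / c" using c unfolding rho_def c_def
    by (simp add: divide_simps)
  moreover have "(1-\<alpha>) * c < (1 - rho r) * c" using assms(1) c by (simp add: mult_strict_right_mono)
  ultimately have h: "(1-\<alpha>) * c < 2" using c by simp
  have a1: "0 < 1 - \<alpha>" using assms by simp
  show ?thesis
  proof (cases "X > 0")
    case True
    have f: "(exp X - 1)*(r-X) \<le> X*c" using fmono[of 0 X r] True unfolding c_def by simp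
    have P: "(exp X - 1)*(r-X) > 0" using True assms by simp
    have "(1-\<alpha>)*c*((exp X - 1)*(r-X)) < 2*((exp X - 1)*(r-X))"
      using h P by (simp add: mult_strict_right_mono)
    also have "\<dots> \<le> 2*(X*c)" using f by simp
    finally have A: "((1-\<alpha>)*((exp X - 1)*(r-X)))*c < (2*X)*c"
      by (simp add: algebra_simps)
    have "(1-\<alpha>)*((exp X - 1)*(r-X)) < 2*X" using A c by simp
    hence "Phi \<alpha> X r > 0" unfolding Phi_def by (simp add: algebra_simps)
    moreover have "(1-\<alpha>)*(exp X - 1) > 0" using True a1 by simp
    ultimately show ?thesis unfolding Psi_def by simp
  next
    case False
    hence X: "X < 0" using assms by simp
    have f: "X*c \<le> (exp X - 1)*(r-X)" using fmono[of X 0 r] X unfolding c_def by simp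
    have P: "(1 - exp X)*(r-X) > 0" using X assms by simp
    have "(1-\<alpha>)*c*((1 - exp X)*(r-X)) < 2*((1 - exp X)*(r-X))"
      using h P by (simp add: mult_strict_right_mono)
    also have "\<dots> \<le> 2*(-X*c)" using f by (simp add: algebra_simps)
    finally have A: "((1-\<alpha>)*((1 - exp X)*(r-X)))*c < (2*(-X))*c"
      by (simp add: algebra_simps)
    have "(1-\<alpha>)*((1 - exp X)*(r-X)) < 2*(-X)" using A c mult_less_cancel_right_pos by blast
    hence "Phi \<alpha> X r < 0" unfolding Phi_def by (simp add: algebra_simps)
    moreover have "(1-\<alpha>)*(exp X - 1) < 0" using X a1 by (simp add: mult_pos_neg)
    ultimately show ?thesis unfolding Psi_def by (simp add: mult_neg_neg)
  qed
qed

lemma psi_nonneg: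
  fixes r X \<alpha> :: real
  assumes "rho r < \<alpha>" "\<alpha> < 1" "X < r"
  shows "0 \<le> Psi \<alpha> X r"
  using psi_pos[OF assms] by (cases "X = 0") (auto simp: Psi_def)

theorem mainTheorem8:
  fixes a b r s \<alpha> \<beta> :: real
  assumes "0 < a" "a < 1" "0 < b" "b < 1" "r > a * s" "s > b * r"
    and "rho r < \<alpha>" "0 \<le> \<alpha>" "\<alpha> < 1"
    and "rho s < \<beta>" "0 \<le> \<beta>" "\<beta> < 1"
  shows "(\<forall>x y. x > 0 \<longrightarrow> y > 0 \<longrightarrow>
           Vfun a b r s (Tmap a b r s \<alpha> \<beta> (x, y)) - Vfun a b r s (x, y)
             \<le> - b * x * Psi \<alpha> (r - x - a * y) r - a * y * Psi \<beta> (s - b * x - y) s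
         \<and> - b * x * Psi \<alpha> (r - x - a * y) r - a * y * Psi \<beta> (s - b * x - y) s \<le> 0)
       \<and> (\<forall>x y. x > 0 \<longrightarrow> y > 0 \<longrightarrow> (x, y) \<noteq> (eqp a b r s, eqq a b r s) \<longrightarrow>
           Vfun a b r s (Tmap a b r s \<alpha> \<beta> (x, y)) - Vfun a b r s (x, y) < 0)"
proof -
  have "a*b < a" using assms(1-4) by simp
  hence ab: "a*b < 1" using assms(2) by linarith
  have D: "Vfun a b r s (Tmap a b r s \<alpha> \<beta> (x, y)) - Vfun a b r s (x, y)
     = (- b * x * Psi \<alpha> (r - x - a * y) r - a * y * Psi \<beta> (s - b * x - y) s)
       - a*b*x*y*((1-\<alpha>)*(exp (r-x-a*y)-1) - (1-\<beta>)*(exp (s-b*x-y)-1))^2" for x y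
    unfolding Tmap_def Psi_def Phi_def using ident[of a b r s x \<alpha> "exp (r-x-a*y)" y \<beta> "exp (s-b*x-y)"]
    by simp
  have pos1: "r - x - a*y < r" if "x > 0" "y > 0" for x y
    using that assms(1) mult_pos_pos[of a y] by linarith
  have pos2: "s - b*x - y < s" if "x > 0" "y > 0" for x y
    using that assms(3) mult_pos_pos[of b x] by linarith
  have sq: "0 \<le> a*b*x*y*((1-\<alpha>)*(exp (r-x-a*y)-1) - (1-\<beta>)*(exp (s-b*x-y)-1))^2"
    if "x > 0" "y > 0" for x y using that assms(1,3) by simp
  have n1: "0 \<le> Psi \<alpha> (r - x - a * y) r" if "x > 0" "y > 0" for x y
    using psi_nonneg[of r \<alpha> "r - x - a*y"] assms that pos1 pos2 by simp
  have n2: "0 \<le> Psi \<beta> (s - b * x - y) s" if "x > 0" "y > 0" for x y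
    using psi_nonneg[of s \<beta> "s - b*x - y"] assms that pos1 pos2 by simp
  show ?thesis
  proof (intro conjI allI impI)
    fix x y :: real assume xy: "x > 0" "y > 0"
    show "Vfun a b r s (Tmap a b r s \<alpha> \<beta> (x, y)) - Vfun a b r s (x, y)
             \<le> - b * x * Psi \<alpha> (r - x - a * y) r - a * y * Psi \<beta> (s - b * x - y) s"
      using D[of x y] sq[OF xy] by linarith
    have "0 \<le> b * x * Psi \<alpha> (r - x - a * y) r" using n1[OF xy] xy assms(3) by simp
    moreover have "0 \<le> a * y * Psi \<beta> (s - b * x - y) s" using n2[OF xy] xy assms(1) by simp
    ultimately show "- b * x * Psi \<alpha> (r - x - a * y) r - a * y * Psi \<beta> (s - b * x - y) s \<le> 0"
      by linarith
  next
    fix x y :: real assume xy: "x > 0" "y > 0" and ne: "(x, y) \<noteq> (eqp a b r s, eqq a b r s)"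
    have "r - x - a*y \<noteq> 0 \<or> s - b*x - y \<noteq> 0"
    proof (rule ccontr)
      assume "\<not> ?thesis"
      hence e: "x = r - a*y" "y = s - b*x" by auto
      hence "x*(1-a*b) = r - a*s" by (simp add: algebra_simps)
      hence ex: "x = eqp a b r s" using ab unfolding eqp_def by (simp add: field_simps)
      have "y = s - b*(r - a*y)" using e(2) unfolding e(1) .
      hence "y*(1-a*b) = s - b*r" by (simp add: algebra_simps)
      hence "y = eqq a b r s" using ab unfolding eqq_def by (simp add: field_simps)
      with ex ne show False by simp
    qed
    hence "0 < b * x * Psi \<alpha> (r - x - a * y) r + a * y * Psi \<beta> (s - b * x - y) s"
    proof
      assume "r - x - a*y \<noteq> 0"
      hence "0 < Psi \<alpha> (r - x - a * y) r"
        using psi_pos[of r \<alpha> "r - x - a*y"] assms xy pos1 pos2 by simp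
      moreover have "0 \<le> a * y * Psi \<beta> (s - b * x - y) s" using n2[OF xy] xy assms(1) by simp
      ultimately show ?thesis using xy assms(3)
        by (metis add_pos_nonneg mult_pos_pos)
    next
      assume "s - b*x - y \<noteq> 0"
      hence "0 < Psi \<beta> (s - b * x - y) s"
        using psi_pos[of s \<beta> "s - b*x - y"] assms xy pos1 pos2 by simp
      moreover have "0 \<le> b * x * Psi \<alpha> (r - x - a * y) r" using n1[OF xy] xy assms(3) by simp
      ultimately show ?thesis using xy assms(1)
        by (metis add_nonneg_pos mult_pos_pos)
    qed
    thus "Vfun a b r s (Tmap a b r s \<alpha> \<beta> (x, y)) - Vfun a b r s (x, y) < 0"
      using D[of x y] sq[OF xy] by linarith
  qed
qed

end
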